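(* As $N\to\infty$, $$\frac{1}{N}\sum_{n\leq N}\log\frac{\sigma(n)}{n}=A+O\!\left(\frac{1}{\log N}\right),\qquad A=\sum_{p\ \mathrm{prime}}\alpha(p)\approx 0.4457,$$ where for a prime $p$ $$\alpha(p)=\left(1-\frac1p\right)\sum_{m\geq1}\frac{1}{p^m}\log\left(1+\frac1p+\cdots+\frac{1}{p^m}\right).$$
   Context: $\sigma(n)=\sum_{d\mid n}d$ denotes the sum-of-divisors function. *)

theory Defs
  imports "HOL-Analysis.Analysis" "HOL-Computational_Algebra.Primes" "HOL-Library.Landau_Symbols"
begin

definition divisor_sigma :: "nat \<Rightarrow> nat" where
  "divisor_sigma n = (\<Sum>d | d dvd n. d)"

definition alpha :: "nat \<Rightarrow> real" where
  "alpha p = (1 - 1 / real p) *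
     (\<Sum>m. (1 / real p ^ (Suc m)) * ln (\<Sum>j\<le>Suc m. 1 / real p ^ j))"

definition const_A :: real where
  "const_A = infsum alpha {p. prime p}"

end

theory Submission
  imports Defs
begin


definition Sp :: "nat \<Rightarrow> nat \<Rightarrow> real" where "Sp p m = (\<Sum>j\<le>m. 1 / real p ^ j)"
definition gp :: "nat \<Rightarrow> nat \<Rightarrow> real" where "gp p m = ln (Sp p m)"
definition Qp :: "nat \<Rightarrow> nat \<Rightarrow> real" where
  "Qp p N = (\<Sum>m<N. (1 / real p) ^ Suc m * (gp p (Suc m) - gp p m))"

lemma geom_bound:
  fixes y :: real assumes "0 \<le> y" "y \<le> 1/2"
  shows "(\<Sum>m\<in>{N..<N+k}. y ^ m) \<le> 2 * y ^ N - 2 * y ^ (N + k)"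
proof (induction k)
  case 0 then show ?case by simp
next
  case (Suc k)
  have "y ^ (N + Suc k) = y * y ^ (N+k)" by simp
  moreover have "y * y ^ (N+k) \<le> 1/2 * y^(N+k)"
    using assms by (intro mult_right_mono) auto
  ultimately show ?case using Suc by simp
qed

lemma geom_bound':
  fixes y :: real assumes "0 \<le> y" "y \<le> 1/2" "N \<le> M"
  shows "(\<Sum>m\<in>{N..<M}. y ^ m) \<le> 2 * y ^ N"
proof -
  obtain k where "M = N + k" using assms(3) le_Suc_ex by blast
  moreover have "y ^ (N+k) \<ge> 0" using assms by simp
  ultimately show ?thesis using geom_bound[OF assms(1,2), of N k] by simp
qed

context
  fixes p :: nat assumes p2: "p \<ge> 2"
begin

private lemma x_bounds: "0 < 1 / real p" "1 / real p \<le> 1/2"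
  using p2 by (auto simp: field_simps)

lemma Sp_Suc: "Sp p (Suc m) = Sp p m + (1 / real p) ^ Suc m"
  by (simp add: Sp_def power_one_over)

lemma Sp_ge1: "Sp p m \<ge> 1"
proof (induction m)
  case 0 then show ?case by (simp add: Sp_def)
next
  case (Suc m)
  have "(1 / real p) ^ Suc m \<ge> 0" using x_bounds by simp
  then show ?case using Suc Sp_Suc[of m] by linarith
qed

lemma Sp_le2: "Sp p m \<le> 2"
proof -
  have "Sp p m = (\<Sum>j\<in>{0..<0+Suc m}. (1 / real p) ^ j)"
    by (simp add: Sp_def power_one_over atLeast0LessThan lessThan_Suc_atMost)
  also have "\<dots> \<le> 2 * (1/real p)^0 - 2 * (1/real p)^(0 + Suc m)"
    by (rule geom_bound) (use x_bounds in auto)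
  also have "\<dots> \<le> 2" using x_bounds by simp
  finally show ?thesis .
qed

lemma gp_0: "gp p 0 = 0" by (simp add: gp_def Sp_def)

lemma gp_nonneg: "gp p m \<ge> 0"
  using Sp_ge1 by (simp add: gp_def)

lemma gp_le1: "gp p m \<le> 1"
proof -
  have "gp p m \<le> Sp p m - 1" unfolding gp_def
    by (rule ln_le_minus_one) (use Sp_ge1[of m] in auto)
  then show ?thesis using Sp_le2[of m] by simp
qed

lemma gp_diff: "0 \<le> gp p (Suc m) - gp p m" "gp p (Suc m) - gp p m \<le> (1 / real p) ^ Suc m"
proof -
  have a: "Sp p m \<ge> 1" by (rule Sp_ge1)
  have b: "Sp p (Suc m) \<ge> Sp p m" using Sp_Suc x_bounds by simp
  show "0 \<le> gp p (Suc m) - gp p m" unfolding gp_def using a b by simp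
  have "gp p (Suc m) - gp p m = ln (Sp p (Suc m) / Sp p m)"
    unfolding gp_def using a b by (simp add: ln_div)
  also have "\<dots> \<le> Sp p (Suc m) / Sp p m - 1"
    by (rule ln_le_minus_one) (use a b in auto)
  also have "\<dots> = (1 / real p) ^ Suc m / Sp p m"
    using a by (simp add: Sp_Suc field_simps)
  also have "\<dots> \<le> (1 / real p) ^ Suc m"
    using a x_bounds by (simp add: divide_le_eq mult_le_cancel_left1)
  finally show "gp p (Suc m) - gp p m \<le> (1 / real p) ^ Suc m" .
qed

lemma abel_gen:
  fixes x :: real and g :: "nat \<Rightarrow> real" assumes "g 0 = 0"
  shows "(1 - x) * (\<Sum>m<M. x ^ Suc m * g (Suc m))
     = (\<Sum>m<M. x ^ Suc m * (g (Suc m) - g m)) - x ^ Suc M * g M"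
proof (induction M)
  case 0 then show ?case by (simp add: assms)
next
  case (Suc M)
  have "(1 - x) * (\<Sum>m<Suc M. x ^ Suc m * g (Suc m)) =
     (1 - x) * (\<Sum>m<M. x ^ Suc m * g (Suc m)) + (1-x) * (x ^ Suc M * g (Suc M))"
    by (simp add: algebra_simps)
  also have "\<dots> = (\<Sum>m<M. x ^ Suc m * (g (Suc m) - g m)) - x ^ Suc M * g M + (1-x) * (x ^ Suc M * g (Suc M))"
    using Suc by simp
  also have "\<dots> = (\<Sum>m<Suc M. x ^ Suc m * (g (Suc m) - g m)) - x ^ Suc (Suc M) * g (Suc M)"
    by (simp only: sum.lessThan_Suc power_Suc) (simp add: algebra_simps)
  finally show ?case .
qed

lemma abel:
  "(1 - 1 / real p) * (\<Sum>m<M. (1 / real p) ^ Suc m * gp p (Suc m))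
     = Qp p M - (1 / real p) ^ Suc M * gp p M"
  unfolding Qp_def by (rule abel_gen) (rule gp_0)

lemma alpha_summable: "summable (\<lambda>m. (1 / real p) ^ Suc m * gp p (Suc m))"
proof (rule summable_comparison_test')
  show "summable (\<lambda>m. (1 / real p) ^ Suc m)"
    using x_bounds by (intro summable_geometric[THEN summable_Suc_iff[THEN iffD2]]) auto
  show "norm ((1 / real p) ^ Suc m * gp p (Suc m)) \<le> (1 / real p) ^ Suc m" for m
  proof -
    have A: "0 \<le> (1/real p)^Suc m" using x_bounds by simp
    have B: "0 \<le> (1/real p)^Suc m * gp p (Suc m)" using A gp_nonneg by simp
    have C: "(1/real p)^Suc m * gp p (Suc m) \<le> (1/real p)^Suc m"
      by (rule mult_left_le) (use gp_le1 A in auto)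
    show ?thesis unfolding real_norm_def abs_of_nonneg[OF B] by (rule C)
  qed
qed

lemma alpha_eq: "alpha p = (1 - 1 / real p) * (\<Sum>m. (1 / real p) ^ Suc m * gp p (Suc m))"
  by (simp add: alpha_def gp_def Sp_def power_one_over)

lemma Qp_lim: "Qp p \<longlonglongrightarrow> alpha p"
proof -
  have 1: "(\<lambda>M. (1 - 1 / real p) * (\<Sum>m<M. (1 / real p) ^ Suc m * gp p (Suc m))) \<longlonglongrightarrow> alpha p"
    unfolding alpha_eq by (intro tendsto_mult_left summable_LIMSEQ alpha_summable)
  have 2: "(\<lambda>M. (1 / real p) ^ Suc M * gp p M) \<longlonglongrightarrow> 0"
  proof (rule tendsto_sandwich[of "\<lambda>_. 0" _ _ "\<lambda>M. (1 / real p) ^ Suc M"])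
    show "\<forall>\<^sub>F n in sequentially. 0 \<le> (1 / real p) ^ Suc n * gp p n"
      using gp_nonneg x_bounds by auto
    show "\<forall>\<^sub>F n in sequentially. (1 / real p) ^ Suc n * gp p n \<le> (1 / real p) ^ Suc n"
    proof (intro always_eventually allI)
      fix n
      show "(1 / real p) ^ Suc n * gp p n \<le> (1 / real p) ^ Suc n"
        by (rule mult_left_le) (use gp_le1 x_bounds in auto)
    qed
    have "(\<lambda>M. (1 / real p) ^ M) \<longlonglongrightarrow> 0" using x_bounds by (intro LIMSEQ_power_zero) auto
    then show "(\<lambda>M. (1 / real p) ^ Suc M) \<longlonglongrightarrow> 0" by (rule LIMSEQ_Suc)
  qed simp
  have "(\<lambda>M. (1 - 1 / real p) * (\<Sum>m<M. (1 / real p) ^ Suc m * gp p (Suc m)) + (1 / real p) ^ Suc M * gp p M) \<longlonglongrightarrow> alpha p + 0"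
    by (intro tendsto_add 1 2)
  then show ?thesis unfolding abel by simp
qed

lemma Qp_diff:
  assumes "N \<le> M"
  shows "0 \<le> Qp p M - Qp p N" "Qp p M - Qp p N \<le> 2 * (1 / real p) ^ (2 * N + 2)"
proof -
  have eq: "Qp p M - Qp p N = (\<Sum>m\<in>{N..<M}. (1 / real p) ^ Suc m * (gp p (Suc m) - gp p m))"
    unfolding Qp_def using assms
    by (metis (no_types, lifting) atLeast0LessThan diff_eq_eq add.commute sum.atLeastLessThan_concat zero_le)
  show "0 \<le> Qp p M - Qp p N" unfolding eq
    using gp_diff(1) x_bounds by (intro sum_nonneg) auto
  have pp: "(2::real) \<le> real p * real p"
  proof -
    have "real p \<ge> 2" using p2 by simp
    then have "real p * real p \<ge> 2 * 2" by (intro mult_mono) auto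
    then show ?thesis by simp
  qed
  have "(\<Sum>m\<in>{N..<M}. (1 / real p) ^ Suc m * (gp p (Suc m) - gp p m))
     \<le> (\<Sum>m\<in>{N..<M}. ((1 / real p)^2) ^ Suc m)"
  proof (intro sum_mono)
    fix m
    have "(1 / real p) ^ Suc m * (gp p (Suc m) - gp p m) \<le> (1 / real p) ^ Suc m * (1 / real p) ^ Suc m"
      using gp_diff(2)[of m] x_bounds by (intro mult_left_mono) auto
    then show "(1 / real p) ^ Suc m * (gp p (Suc m) - gp p m) \<le> ((1 / real p)^2) ^ Suc m"
      by (simp only: power2_eq_square power_mult_distrib)
  qed
  also have "\<dots> = (1 / real p)^2 * (\<Sum>m\<in>{N..<M}. ((1 / real p)^2) ^ m)"
    by (simp add: sum_distrib_left)
  also have "\<dots> \<le> (1 / real p)^2 * (2 * ((1 / real p)^2) ^ N)"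
    using x_bounds assms pp
    by (intro mult_left_mono geom_bound') (auto simp: power2_eq_square field_simps)
  also have "\<dots> = 2 * (1 / real p) ^ (2 * N + 2)"
    by (simp only: power_mult[symmetric] power_add mult.commute[of 2 N]) (simp add: power2_eq_square)
  finally show "Qp p M - Qp p N \<le> 2 * (1 / real p) ^ (2 * N + 2)" unfolding eq .
qed

lemma alpha_Qp: "0 \<le> alpha p - Qp p N" "alpha p - Qp p N \<le> 2 * (1 / real p) ^ (2 * N + 2)"
proof -
  have L: "(\<lambda>M. Qp p M - Qp p N) \<longlonglongrightarrow> alpha p - Qp p N"
    by (intro tendsto_diff Qp_lim tendsto_const)
  show "0 \<le> alpha p - Qp p N"
    by (rule LIMSEQ_le_const[OF L]) (use Qp_diff(1) in auto)
  show "alpha p - Qp p N \<le> 2 * (1 / real p) ^ (2 * N + 2)"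
    by (rule LIMSEQ_le_const2[OF L]) (use Qp_diff(2) in auto)
qed

lemma alpha_nonneg: "alpha p \<ge> 0"
  using alpha_Qp(1)[of 0] by (simp add: Qp_def)

lemma alpha_le: "alpha p \<le> 2 / real p ^ 2"
  using alpha_Qp(2)[of 0] by (simp add: Qp_def power_one_over power2_eq_square)

end



lemma inv_sq_sum:
  assumes "N \<ge> 1"
  shows "(\<Sum>n\<in>{Suc N..N+k}. 1 / real n ^ 2) \<le> 1 / real N - 1 / real (N + k)"
proof (induction k)
  case 0 then show ?case by simp
next
  case (Suc k)
  have "{Suc N..N + Suc k} = insert (N + Suc k) {Suc N..N+k}" by auto
  then have "(\<Sum>n\<in>{Suc N..N+Suc k}. 1 / real n ^ 2) = 1 / real (N + Suc k) ^ 2 + (\<Sum>n\<in>{Suc N..N+k}. 1 / real n ^ 2)"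
    by simp
  also have "\<dots> \<le> 1 / real (N + Suc k) ^ 2 + (1 / real N - 1 / real (N + k))"
    using Suc by simp
  also have "1 / real (N + Suc k) ^ 2 \<le> 1 / real (N + k) - 1 / real (N + Suc k)"
  proof -
    have a: "real (N + k) > 0" using assms by simp
    have "1 / real (N + k) - 1 / real (N + Suc k) = 1 / (real (N+k) * real (N + Suc k))"
      using a by (simp add: field_simps)
    also have "\<dots> \<ge> 1 / real (N + Suc k) ^ 2"
      using a by (intro divide_left_mono) (auto simp: power2_eq_square intro!: mult_right_mono)
    finally show ?thesis .
  qed
  finally show ?case by simp
qed

lemma inv_sq_finite:
  assumes "N \<ge> 1" "finite F" "F \<subseteq> {N<..}"
  shows "(\<Sum>n\<in>F. 1 / real n ^ 2) \<le> 1 / real N"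
proof (cases "F = {}")
  case True then show ?thesis by simp
next
  case False
  define M where "M = Max F"
  have "M \<in> F" using False assms M_def by simp
  then have "M > N" using assms by auto
  have sub: "F \<subseteq> {Suc N..N + (M - N)}"
  proof
    fix x assume x: "x \<in> F"
    then have "x > N" using assms by auto
    moreover have "x \<le> M" unfolding M_def using x assms by simp
    ultimately show "x \<in> {Suc N..N + (M - N)}" using \<open>M > N\<close> by auto
  qed
  have "(\<Sum>n\<in>F. 1 / real n ^ 2) \<le> (\<Sum>n\<in>{Suc N..N + (M - N)}. 1 / real n ^ 2)"
    by (rule sum_mono2[OF _ sub]) auto
  also have "\<dots> \<le> 1 / real N - 1 / real (N + (M - N))" by (rule inv_sq_sum[OF assms(1)])
  also have "\<dots> \<le> 1 / real N" by simp
  finally show ?thesis .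
qed

lemma alpha_finite_bound:
  assumes "N \<ge> 1" "finite F" "F \<subseteq> {p. prime p \<and> N < p}"
  shows "sum alpha F \<le> 2 / real N"
proof -
  have "sum alpha F \<le> (\<Sum>p\<in>F. 2 * (1 / real p ^ 2))"
  proof (rule sum_mono)
    fix p assume "p \<in> F"
    then have "prime p" using assms by auto
    then have "p \<ge> 2" by (simp add: prime_ge_2_nat)
    then show "alpha p \<le> 2 * (1 / real p ^ 2)" using alpha_le[of p] by simp
  qed
  also have "\<dots> = 2 * (\<Sum>p\<in>F. 1 / real p ^ 2)" by (simp add: sum_distrib_left)
  also have "\<dots> \<le> 2 * (1 / real N)"
    using inv_sq_finite[OF assms(1,2)] assms(3) by (intro mult_left_mono) auto
  finally show ?thesis by simp
qed

lemma alpha_nonneg': "prime p \<Longrightarrow> alpha p \<ge> 0"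
  by (rule alpha_nonneg) (simp add: prime_ge_2_nat)

lemma alpha_summable_primes: "alpha summable_on {p. prime p}"
proof (rule nonneg_bdd_above_summable_on)
  show "\<And>x. x \<in> {p. prime p} \<Longrightarrow> 0 \<le> alpha x" using alpha_nonneg' by auto
  show "bdd_above (sum alpha ` {F. F \<subseteq> {p. prime p} \<and> finite F})"
  proof (rule bdd_aboveI[of _ "2 / real 1"])
    fix y assume "y \<in> sum alpha ` {F. F \<subseteq> {p. prime p} \<and> finite F}"
    then obtain F where F: "F \<subseteq> {p. prime p}" "finite F" "y = sum alpha F" by auto
    have "F \<subseteq> {p. prime p \<and> 1 < p}" using F prime_gt_1_nat by auto
    then show "y \<le> 2 / real 1" using alpha_finite_bound[of 1 F] F by simp
  qed
qed

lemma const_A_split: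
  assumes "N \<ge> 1"
  shows "const_A = (\<Sum>p | prime p \<and> p \<le> N. alpha p) + infsum alpha {p. prime p \<and> N < p}"
    "0 \<le> infsum alpha {p. prime p \<and> N < p}" "infsum alpha {p. prime p \<and> N < p} \<le> 2 / real N"
proof -
  have fin: "finite {p. prime p \<and> p \<le> N}" by auto
  have un: "{p. prime p} = {p. prime p \<and> p \<le> N} \<union> {p. prime p \<and> N < p}" by auto
  have s2: "alpha summable_on {p. prime p \<and> N < p}"
    by (rule summable_on_subset_banach[OF alpha_summable_primes]) auto
  have "const_A = infsum alpha {p. prime p \<and> p \<le> N} + infsum alpha {p. prime p \<and> N < p}"
    unfolding const_A_def un
    by (rule infsum_Un_disjoint) (use fin s2 in \<open>auto intro: summable_on_finite\<close>)
  then show "const_A = (\<Sum>p | prime p \<and> p \<le> N. alpha p) + infsum alpha {p. prime p \<and> N < p}"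
    using fin by simp
  show "0 \<le> infsum alpha {p. prime p \<and> N < p}"
    by (rule infsum_nonneg) (use alpha_nonneg' in auto)
  show "infsum alpha {p. prime p \<and> N < p} \<le> 2 / real N"
    by (rule infsum_le_finite_sums[OF s2]) (rule alpha_finite_bound[OF assms])
qed




definition Dv :: "nat \<Rightarrow> real" where "Dv n = (\<Sum>d | d dvd n. 1 / real d)"

lemma gp_0': "gp p 0 = 0" by (simp add: gp_def Sp_def)

lemma sigma_Dv:
  assumes "n > 0"
  shows "real (divisor_sigma n) / real n = Dv n"
proof -
  have fin: "finite {d. d dvd n}" using assms by simp
  have "Dv n = (\<Sum>d | d dvd n. 1 / real (n div d))"
    unfolding Dv_def
    by (rule sum.reindex_bij_witness[of _ "\<lambda>d. n div d" "\<lambda>d. n div d"])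
       (use assms in \<open>auto simp: dvd_div_eq_mult div_div_eq_right dvd_mult_div_cancel intro: dvd_div_mult_self\<close>)
  also have "\<dots> = (\<Sum>d | d dvd n. real d / real n)"
  proof (rule sum.cong[OF refl])
    fix d assume "d \<in> {d. d dvd n}"
    then have "d dvd n" by simp
    then have "real (n div d) = real n / real d" by (simp add: real_of_nat_div)
    moreover have "d > 0" using \<open>d dvd n\<close> assms by (auto intro: Nat.gr0I)
    ultimately show "1 / real (n div d) = real d / real n" by simp
  qed
  also have "\<dots> = real (divisor_sigma n) / real n"
    by (simp add: divisor_sigma_def sum_divide_distrib)
  finally show ?thesis by simp
qed

lemma Dv_mult:
  assumes "coprime a b" "a > 0" "b > 0"
  shows "Dv (a * b) = Dv a * Dv b"
proof -
  let ?A = "{d. d dvd a}" and ?B = "{d. d dvd b}"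
  have fa: "finite ?A" and fb: "finite ?B" using assms by auto
  have "Dv a * Dv b = (\<Sum>x\<in>?A. \<Sum>y\<in>?B. 1 / real x * (1 / real y))"
    unfolding Dv_def by (rule sum_product)
  also have "\<dots> = (\<Sum>z\<in>?A \<times> ?B. 1 / real (fst z * snd z))"
    by (subst sum.cartesian_product) (simp add: case_prod_beta)
  also have "\<dots> = (\<Sum>d\<in>(\<lambda>z. fst z * snd z) ` (?A \<times> ?B). 1 / real d)"
  proof (rule sum.reindex[symmetric, unfolded comp_def])
    show "inj_on (\<lambda>z. fst z * snd z) (?A \<times> ?B)"
    proof (rule inj_onI)
      fix z w assume z: "z \<in> ?A \<times> ?B" and w: "w \<in> ?A \<times> ?B" and eq: "fst z * snd z = fst w * snd w"
      have key: "gcd a (x * y) = x \<and> gcd b (x * y) = y" if "x dvd a" "y dvd b" for x y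
      proof
        have "coprime a y" by (rule coprime_divisors[OF dvd_refl that(2) assms(1)])
        then have "gcd a (x * y) = gcd a x" by (rule gcd_mult_right_right_cancel)
        then show "gcd a (x * y) = x" using that(1) by (simp add: gcd_nat.absorb2)
        have "coprime x b" by (rule coprime_divisors[OF that(1) dvd_refl assms(1)])
        then have "coprime b x" by (simp add: coprime_commute)
        then have "gcd b (y * x) = gcd b y" by (rule gcd_mult_right_right_cancel)
        then show "gcd b (x * y) = y" using that(2) by (simp add: gcd_nat.absorb2 mult.commute)
      qed
      have "fst z = fst w" using key[of "fst z" "snd z"] key[of "fst w" "snd w"] z w eq by auto
      moreover have "snd z = snd w" using key[of "fst z" "snd z"] key[of "fst w" "snd w"] z w eq by auto
      ultimately show "z = w" by (simp add: prod_eq_iff)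
    qed
  qed
  also have "(\<lambda>z. fst z * snd z) ` (?A \<times> ?B) = {d. d dvd a * b}"
  proof (intro equalityI subsetI)
    fix d assume "d \<in> (\<lambda>z. fst z * snd z) ` (?A \<times> ?B)"
    then show "d \<in> {d. d dvd a * b}" by (auto intro: mult_dvd_mono)
  next
    fix d assume "d \<in> {d. d dvd a * b}"
    then obtain x y where "d = x * y" "x dvd a" "y dvd b" using division_decomp by blast
    then show "d \<in> (\<lambda>z. fst z * snd z) ` (?A \<times> ?B)" by (auto intro!: image_eqI[of _ _ "(x, y)"])
  qed
  finally show ?thesis unfolding Dv_def by simp
qed

lemma Dv_primepow:
  assumes "prime p"
  shows "Dv (p ^ v) = Sp p v"
proof -
  have "{d. d dvd p ^ v} = (\<lambda>i. p ^ i) ` {..v}"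
    using divides_primepow_nat[OF assms] by auto
  moreover have "inj_on (\<lambda>i. p ^ i) {..v}"
    using prime_gt_1_nat[OF assms] by (auto intro!: inj_onI simp: power_inject_exp)
  ultimately show ?thesis unfolding Dv_def Sp_def
    by (simp add: sum.reindex)
qed

lemma Dv_pos: "n > 0 \<Longrightarrow> Dv n \<ge> 1"
proof -
  assume "n > 0"
  then have "1 / real 1 \<le> Dv n" unfolding Dv_def
    by (intro member_le_sum) auto
  then show ?thesis by simp
qed

lemma ln_Dv:
  assumes "n > 0" "finite P" "\<And>q. q \<in> P \<Longrightarrow> prime q" "\<And>q. prime q \<Longrightarrow> q dvd n \<Longrightarrow> q \<in> P"
  shows "ln (Dv n) = (\<Sum>q\<in>P. gp q (multiplicity q n))"
  using assms
proof (induction n rule: less_induct)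
  case (less n)
  show ?case
  proof (cases "n = 1")
    case True
    have "Dv 1 = 1" by (simp add: Dv_def)
    then show ?thesis using True by (simp add: gp_0')
  next
    case False
    then obtain p where p: "prime p" "p dvd n" using prime_factor_nat by blast
    define v where "v = multiplicity p n"
    have "n \<noteq> 0" "\<not> is_unit p" using less.prems(1) p(1) by (auto simp: not_prime_unit)
    then obtain m where m: "n = p ^ v * m" "\<not> p dvd m"
      unfolding v_def by (rule multiplicity_decompose')
    have "v > 0" unfolding v_def using p less.prems(1) by (simp add: prime_multiplicity_gt_zero_iff)
    have "m > 0" using m less.prems(1) by (auto intro: Nat.gr0I)
    have "p ^ v \<ge> 2"
      using prime_gt_1_nat[OF p(1)] \<open>v > 0\<close>
      by (metis Suc_1 Suc_leI one_less_power)
    then have "m < n" using m(1) \<open>m > 0\<close> n_less_m_mult_n[of m "p^v"] by simp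
    have cop: "coprime (p ^ v) m"
      using m(2) p(1) by (simp add: prime_imp_coprime_nat)
    have sub: "q \<in> P" if "prime q" "q dvd m" for q
    proof -
      have "q dvd p ^ v * m" using that(2) by (rule dvd_mult)
      then show ?thesis using less.prems(4) that(1) m(1) by simp
    qed
    have IH: "ln (Dv m) = (\<Sum>q\<in>P. gp q (multiplicity q m))"
      by (rule less.IH[OF \<open>m < n\<close> \<open>m > 0\<close> less.prems(2,3) sub]) auto
    have "Dv n = Sp p v * Dv m"
      using Dv_mult[OF cop] \<open>m > 0\<close> p(1) m(1) Dv_primepow[OF p(1)] by (simp add: prime_gt_0_nat)
    then have "ln (Dv n) = gp p v + ln (Dv m)"
      using Sp_ge1[of p v] Dv_pos[OF \<open>m > 0\<close>] prime_ge_2_nat[OF p(1)]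
      by (simp add: gp_def ln_mult)
    have pP: "p \<in> P" using less.prems(4) p by blast
    have oth: "multiplicity q n = multiplicity q m" if "q \<in> P - {p}" for q
    proof -
      have q: "prime q" "q \<noteq> p" using that less.prems(3) by auto
      have "\<not> q dvd p ^ v"
        using q p(1) by (metis prime_dvd_power_nat primes_dvd_imp_eq)
      then have "multiplicity q (p ^ v) = 0" by (rule not_dvd_imp_multiplicity_0)
      then show ?thesis using m(1) prime_elem_multiplicity_mult_distrib[of q "p^v" m] q(1) \<open>m > 0\<close> p(1)
        by (simp add: prime_gt_0_nat)
    qed
    have "(\<Sum>q\<in>P. gp q (multiplicity q n)) = gp p v + (\<Sum>q\<in>P - {p}. gp q (multiplicity q n))"
      using sum.remove[OF less.prems(2) pP] v_def by simp
    also have "(\<Sum>q\<in>P - {p}. gp q (multiplicity q n)) = (\<Sum>q\<in>P - {p}. gp q (multiplicity q m))"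
      using oth by simp
    also have "\<dots> = (\<Sum>q\<in>P. gp q (multiplicity q m))"
      using sum.remove[OF less.prems(2) pP, of "\<lambda>q. gp q (multiplicity q m)"] m(2)
      by (simp add: not_dvd_imp_multiplicity_0 gp_0')
    finally show ?thesis using \<open>ln (Dv n) = gp p v + ln (Dv m)\<close> IH by simp
  qed
qed




lemma telescope_mult:
  assumes "prime p" "n > 0" "n \<le> N"
  shows "gp p (multiplicity p n) = (\<Sum>k<N. if p ^ Suc k dvd n then gp p (Suc k) - gp p k else 0)"
proof -
  define v where "v = multiplicity p n"
  have "p ^ v dvd n" unfolding v_def by (rule multiplicity_dvd)
  then have "p ^ v \<le> n" using assms(2) by (rule dvd_imp_le)
  moreover have "v < p ^ v"
  proof -
    have "v < 2 ^ v" by (rule less_exp)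
    also have "2 ^ v \<le> p ^ v" using prime_ge_2_nat[OF assms(1)] by (rule power_mono) simp
    finally show ?thesis .
  qed
  ultimately have "v \<le> N" using assms(3) by linarith
  have iff: "p ^ Suc k dvd n \<longleftrightarrow> k < v" for k
    unfolding v_def using power_dvd_iff_le_multiplicity[of n p "Suc k"] assms prime_gt_1_nat[OF assms(1)] by auto
  have "(\<Sum>k<N. if p ^ Suc k dvd n then gp p (Suc k) - gp p k else 0)
      = (\<Sum>k<N. if k \<in> {..<v} then gp p (Suc k) - gp p k else 0)"
    by (rule sum.cong[OF refl]) (simp only: iff lessThan_iff)
  also have "\<dots> = (\<Sum>k\<in>{..<N} \<inter> {..<v}. gp p (Suc k) - gp p k)"
    by (simp add: sum.inter_restrict)
  also have "{..<N} \<inter> {..<v} = {..<v}" using \<open>v \<le> N\<close> by auto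
  also have "(\<Sum>k<v. gp p (Suc k) - gp p k) = gp p v - gp p 0"
    by (rule sum_lessThan_telescope)
  finally show ?thesis unfolding v_def by (simp add: gp_0')
qed

lemma card_multiples:
  assumes "q > 0"
  shows "card {n\<in>{1..N}. q dvd n} = N div q"
proof -
  have "bij_betw (\<lambda>j. j * q) {1..N div q} {n\<in>{1..N}. q dvd n}"
  proof (rule bij_betw_imageI)
    show "inj_on (\<lambda>j. j * q) {1..N div q}" using assms by (auto intro!: inj_onI)
    show "(\<lambda>j. j * q) ` {1..N div q} = {n\<in>{1..N}. q dvd n}"
    proof (intro equalityI subsetI)
      fix n assume "n \<in> (\<lambda>j. j * q) ` {1..N div q}"
      then obtain j where j0: "j \<in> {1..N div q}" "n = j * q" by blast
      then have j: "n = j * q" "1 \<le> j" "j \<le> N div q" by auto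
      have "j * q \<le> N" using j(3) assms by (simp add: less_eq_div_iff_mult_less_eq)
      then show "n \<in> {n\<in>{1..N}. q dvd n}" using j assms by auto
    next
      fix n assume n: "n \<in> {n\<in>{1..N}. q dvd n}"
      then obtain j where j: "n = j * q" by (auto elim!: dvdE simp: mult.commute)
      have "1 \<le> j" using n j by (cases j) auto
      moreover have "j \<le> N div q" using n j assms by (simp add: less_eq_div_iff_mult_less_eq)
      ultimately show "n \<in> (\<lambda>j. j * q) ` {1..N div q}" using j by auto
    qed
  qed
  then show ?thesis by (simp add: bij_betw_same_card[symmetric])
qed

lemma main_identity:
  assumes "N \<ge> 1"
  shows "(\<Sum>n=1..N. ln (real (divisor_sigma n) / real n))
     = (\<Sum>p | prime p \<and> p \<le> N. \<Sum>k<N. (gp p (Suc k) - gp p k) * real (N div p ^ Suc k))"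
proof -
  let ?P = "{p. prime p \<and> p \<le> N}"
  have fin: "finite ?P" by auto
  have "(\<Sum>n=1..N. ln (real (divisor_sigma n) / real n))
     = (\<Sum>n=1..N. \<Sum>p\<in>?P. \<Sum>k<N. if p ^ Suc k dvd n then gp p (Suc k) - gp p k else 0)"
  proof (rule sum.cong[OF refl])
    fix n assume n: "n \<in> {1..N}"
    then have "n > 0" by simp
    have "ln (real (divisor_sigma n) / real n) = ln (Dv n)" using sigma_Dv[OF \<open>n > 0\<close>] by simp
    also have "\<dots> = (\<Sum>p\<in>?P. gp p (multiplicity p n))"
      by (rule ln_Dv[OF \<open>n > 0\<close> fin]) (use n dvd_imp_le in \<open>auto intro: order.trans\<close>)
    also have "\<dots> = (\<Sum>p\<in>?P. \<Sum>k<N. if p ^ Suc k dvd n then gp p (Suc k) - gp p k else 0)"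
      by (rule sum.cong[OF refl]) (rule telescope_mult, use n in auto)
    finally show "ln (real (divisor_sigma n) / real n) = \<dots>" .
  qed
  also have "\<dots> = (\<Sum>p\<in>?P. \<Sum>k<N. \<Sum>n=1..N. if p ^ Suc k dvd n then gp p (Suc k) - gp p k else 0)"
    by (subst sum.swap) (simp add: sum.swap[of _ "{..<N}"])
  also have "\<dots> = (\<Sum>p\<in>?P. \<Sum>k<N. (gp p (Suc k) - gp p k) * real (N div p ^ Suc k))"
  proof (intro sum.cong refl)
    fix p k assume p: "p \<in> ?P"
    have "(\<Sum>n=1..N. if p ^ Suc k dvd n then gp p (Suc k) - gp p k else 0)
       = (\<Sum>n\<in>{n\<in>{1..N}. p ^ Suc k dvd n}. gp p (Suc k) - gp p k)"
      by (rule sum.inter_filter[symmetric]) simp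
    also have "\<dots> = (gp p (Suc k) - gp p k) * real (card {n\<in>{1..N}. p ^ Suc k dvd n})"
      by (simp only: sum_constant mult.commute)
    also have "card {n\<in>{1..N}. p ^ Suc k dvd n} = N div p ^ Suc k"
      by (rule card_multiples) (use p prime_gt_0_nat in auto)
    finally show "(\<Sum>n=1..N. if p ^ Suc k dvd n then gp p (Suc k) - gp p k else 0) = (gp p (Suc k) - gp p k) * real (N div p ^ Suc k)" .
  qed
  finally show ?thesis .
qed




lemma count_err:
  assumes "p \<ge> 2" "N \<ge> 1"
  shows "\<bar>(\<Sum>k<N. (gp p (Suc k) - gp p k) * real (N div p ^ Suc k)) / real N - Qp p N\<bar> \<le> 2 / (real p * real N)"
proof -
  have xb: "0 < 1 / real p" "1 / real p \<le> 1/2" using assms by (auto simp: field_simps)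
  have Nn: "real N > 0" using assms by simp
  define d where "d k = gp p (Suc k) - gp p k" for k
  have trm: "(1 / real p) ^ Suc k - real (N div p ^ Suc k) / real N
      = real (N mod p ^ Suc k) / (real (p ^ Suc k) * real N)" for k
  proof -
    define q where "q = p ^ Suc k"
    have q0: "real q > 0" using assms unfolding q_def by simp
    have "real N = real q * real (N div q) + real (N mod q)"
      by (metis div_mult_mod_eq mult.commute of_nat_add of_nat_mult)
    moreover have "(1 / real p) ^ Suc k = 1 / real q" unfolding q_def by (simp add: power_one_over)
    ultimately show ?thesis using q0 Nn unfolding q_def[symmetric] by (simp add: field_simps)
  qed
  have tb: "0 \<le> (1 / real p) ^ Suc k - real (N div p ^ Suc k) / real N"
      "(1 / real p) ^ Suc k - real (N div p ^ Suc k) / real N \<le> 1 / real N" for k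
  proof -
    have q0: "real (p ^ Suc k) > 0" using assms by simp
    have "N mod p ^ Suc k < p ^ Suc k" using assms by simp
    then have "real (N mod p ^ Suc k) \<le> real (p ^ Suc k)" by linarith
    then show "(1 / real p) ^ Suc k - real (N div p ^ Suc k) / real N \<le> 1 / real N"
      unfolding trm using q0 Nn by (simp add: field_simps)
    show "0 \<le> (1 / real p) ^ Suc k - real (N div p ^ Suc k) / real N"
      unfolding trm using q0 Nn by simp
  qed
  have eq: "Qp p N - (\<Sum>k<N. d k * real (N div p ^ Suc k)) / real N
      = (\<Sum>k<N. d k * ((1 / real p) ^ Suc k - real (N div p ^ Suc k) / real N))"
    unfolding Qp_def d_def sum_divide_distrib sum_subtractf[symmetric]
    by (rule sum.cong[OF refl]) (use Nn in \<open>simp add: field_simps\<close>)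
  have dk: "0 \<le> d k" "d k \<le> (1 / real p) ^ Suc k" for k
    unfolding d_def using gp_diff[OF assms(1)] by auto
  have lo: "0 \<le> (\<Sum>k<N. d k * ((1 / real p) ^ Suc k - real (N div p ^ Suc k) / real N))"
    using dk tb by (intro sum_nonneg mult_nonneg_nonneg) auto
  have "(\<Sum>k<N. d k * ((1 / real p) ^ Suc k - real (N div p ^ Suc k) / real N))
      \<le> (\<Sum>k<N. (1 / real p) ^ Suc k * (1 / real N))"
    using dk tb by (intro sum_mono mult_mono) auto
  also have "\<dots> = (1 / real p) * (1 / real N) * (\<Sum>k\<in>{0..<N}. (1 / real p) ^ k)"
    by (simp add: sum_distrib_left atLeast0LessThan algebra_simps)
  also have "\<dots> \<le> (1 / real p) * (1 / real N) * (2 * (1 / real p) ^ 0)"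
    using xb Nn by (intro mult_left_mono geom_bound') auto
  also have "\<dots> = 2 / (real p * real N)" by simp
  finally have hi: "(\<Sum>k<N. d k * ((1 / real p) ^ Suc k - real (N div p ^ Suc k) / real N)) \<le> 2 / (real p * real N)" .
  show ?thesis using lo hi eq unfolding d_def by linarith
qed

lemma alpha_err:
  assumes "p \<ge> 2" "N \<ge> 1"
  shows "\<bar>alpha p - Qp p N\<bar> \<le> 2 / (real p * real N)"
proof -
  have "N < 2 ^ (2 * N + 1)"
    using less_exp[of "2*N+1"] by linarith
  also have "(2::nat) ^ (2 * N + 1) \<le> p ^ (2 * N + 1)" using assms by (intro power_mono) auto
  finally have "real N \<le> real p ^ (2 * N + 1)" by (metis less_imp_le of_nat_le_iff of_nat_power)
  then have a: "(1 / real p) ^ (2 * N + 1) \<le> 1 / real N"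
    using assms by (simp add: power_one_over frac_le)
  have "(1 / real p) ^ (2 * N + 2) = (1 / real p) * (1 / real p) ^ (2 * N + 1)" by simp
  also have "\<dots> \<le> (1 / real p) * (1 / real N)"
    using a assms by (intro mult_left_mono) auto
  finally have "2 * (1 / real p) ^ (2 * N + 2) \<le> 2 / (real p * real N)" by simp
  then show ?thesis using alpha_Qp[OF assms(1), of N] by linarith
qed

lemma harm_bound:
  "(\<Sum>n\<in>{1..Suc k}. 1 / real n) \<le> 1 + ln (real (Suc k))"
proof (induction k)
  case 0 then show ?case by simp
next
  case (Suc k)
  have pos: "real (Suc k) > 0" by simp
  have "ln (real (Suc k) / real (Suc (Suc k))) \<le> real (Suc k) / real (Suc (Suc k)) - 1"
    by (rule ln_le_minus_one) simp
  then have "ln (real (Suc k)) - ln (real (Suc (Suc k))) \<le> - 1 / real (Suc (Suc k))"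
    by (simp add: ln_div field_simps del: of_nat_Suc)
  moreover have "(\<Sum>n\<in>{1..Suc (Suc k)}. 1 / real n) = (\<Sum>n\<in>{1..Suc k}. 1 / real n) + 1 / real (Suc (Suc k))"
    by (simp del: of_nat_Suc)
  ultimately show ?case using Suc by (simp del: of_nat_Suc)
qed

lemma prime_recip_bound:
  assumes "N \<ge> 1"
  shows "(\<Sum>p | prime p \<and> p \<le> N. 1 / real p) \<le> 1 + ln (real N)"
proof -
  have "(\<Sum>p | prime p \<and> p \<le> N. 1 / real p) \<le> (\<Sum>n\<in>{1..N}. 1 / real n)"
    by (rule sum_mono2) (auto simp: prime_gt_0_nat Suc_le_eq)
  also obtain k where "N = Suc k" using assms by (cases N) auto
  then have "(\<Sum>n\<in>{1..N}. 1 / real n) \<le> 1 + ln (real N)" using harm_bound by simp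
  finally show ?thesis .
qed

lemma ln_sq_le: fixes x :: real assumes "x > 0" shows "(ln x)^2 \<le> 4 * x \<or> ln x < 0"
proof (cases "ln x < 0")
  case False
  have "ln (sqrt x) \<le> sqrt x - 1" by (rule ln_le_minus_one) (use assms in simp)
  then have "ln x \<le> 2 * sqrt x" using assms by (simp add: ln_sqrt)
  then have "(ln x)^2 \<le> (2 * sqrt x)^2" using False by (intro power_mono) auto
  then show ?thesis using assms by (simp add: power_mult_distrib)
qed simp




lemma final_bound:
  assumes "N \<ge> 1"
  shows "\<bar>(1 / real N) * (\<Sum>n=1..N. ln (real (divisor_sigma n) / real n)) - const_A\<bar>
     \<le> (6 + 4 * ln (real N)) / real N"
proof -
  let ?P = "{p. prime p \<and> p \<le> N}"
  define T where "T = infsum alpha {p. prime p \<and> N < p}"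
  define S where "S p = (\<Sum>k<N. (gp p (Suc k) - gp p k) * real (N div p ^ Suc k))" for p
  have Nn: "real N > 0" using assms by simp
  have avg: "(1 / real N) * (\<Sum>n=1..N. ln (real (divisor_sigma n) / real n)) = (\<Sum>p\<in>?P. S p / real N)"
    unfolding main_identity[OF assms] S_def by (simp add: sum_divide_distrib)
  have cA: "const_A = (\<Sum>p\<in>?P. alpha p) + T" and T: "0 \<le> T" "T \<le> 2 / real N"
    using const_A_split[OF assms] unfolding T_def by auto
  have per: "\<bar>S p / real N - alpha p\<bar> \<le> 4 * (1 / real p) / real N" if "p \<in> ?P" for p
  proof -
    have p2: "p \<ge> 2" using that prime_ge_2_nat by auto
    have "\<bar>S p / real N - alpha p\<bar> \<le> \<bar>S p / real N - Qp p N\<bar> + \<bar>alpha p - Qp p N\<bar>" by linarith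
    also have "\<dots> \<le> 2 / (real p * real N) + 2 / (real p * real N)"
      using count_err[OF p2 assms] alpha_err[OF p2 assms] unfolding S_def by (intro add_mono) auto
    also have "\<dots> = 4 * (1 / real p) / real N" using p2 Nn by (simp add: field_simps)
    finally show ?thesis .
  qed
  have "\<bar>(\<Sum>p\<in>?P. S p / real N) - ((\<Sum>p\<in>?P. alpha p) + T)\<bar>
      \<le> \<bar>\<Sum>p\<in>?P. S p / real N - alpha p\<bar> + T"
    using T by (simp add: sum_subtractf)
  also have "\<bar>\<Sum>p\<in>?P. S p / real N - alpha p\<bar> \<le> (\<Sum>p\<in>?P. \<bar>S p / real N - alpha p\<bar>)"
    by (rule sum_abs)
  also have "\<dots> \<le> (\<Sum>p\<in>?P. 4 * (1 / real p) / real N)"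
    by (rule sum_mono) (rule per)
  also have "\<dots> = 4 * (\<Sum>p\<in>?P. 1 / real p) / real N"
    by (simp add: sum_divide_distrib sum_distrib_left)
  also have "\<dots> \<le> 4 * (1 + ln (real N)) / real N"
    using prime_recip_bound[OF assms] Nn by (intro divide_right_mono mult_left_mono) auto
  finally have "\<bar>(\<Sum>p\<in>?P. S p / real N) - ((\<Sum>p\<in>?P. alpha p) + T)\<bar>
      \<le> 4 * (1 + ln (real N)) / real N + 2 / real N" using T by linarith
  also have "\<dots> = (6 + 4 * ln (real N)) / real N" using Nn by (simp add: field_simps)
  finally show ?thesis unfolding avg cA .
qed

theorem proposition3p1:
  shows "alpha summable_on {p. prime p} \<and>
    (\<lambda>N::nat. (1 / real N) * (\<Sum>n=1..N. ln (real (divisor_sigma n) / real n)) - const_A)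
      \<in> O(\<lambda>N. 1 / ln (real N))"
proof
  show "alpha summable_on {p. prime p}" by (rule alpha_summable_primes)
  show "(\<lambda>N::nat. (1 / real N) * (\<Sum>n=1..N. ln (real (divisor_sigma n) / real n)) - const_A)
      \<in> O(\<lambda>N. 1 / ln (real N))"
  proof (rule bigoI[where c = 40])
    show "\<forall>\<^sub>F N in at_top. norm ((1 / real N) * (\<Sum>n=1..N. ln (real (divisor_sigma n) / real n)) - const_A)
        \<le> 40 * norm (1 / ln (real N))"
      using eventually_ge_at_top[of "3::nat"]
    proof eventually_elim
      case (elim N)
      have N1: "N \<ge> 1" using elim by simp
      have Nr: "real N \<ge> 3" using elim by simp
      have L1: "ln (real N) \<ge> 1"
      proof -
        have "exp 1 \<le> real N" using exp_le Nr by linarith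
        then have "ln (exp 1) \<le> ln (real N)" by (subst ln_le_cancel_iff) (use Nr in auto)
        then show ?thesis by simp
      qed
      define L where "L = ln (real N)"
      have L1': "L \<ge> 1" using L1 unfolding L_def .
      have L2: "L * L \<le> 4 * real N" using ln_sq_le[of "real N"] L1 Nr unfolding L_def
        by (auto simp: power2_eq_square)
      have h: "L * 1 \<le> L * L" by (rule mult_left_mono) (use L1' in auto)
      have key: "(6 + 4 * L) * L \<le> 40 * real N"
      proof -
        have "(6 + 4 * L) * L = 6 * L + 4 * (L * L)" by (simp add: distrib_right)
        then show ?thesis using h L2 by linarith
      qed
      have NL: "real N * L > 0" using Nr L1' by simp
      have "(6 + 4 * L) / real N = ((6 + 4 * L) * L) / (real N * L)"
        using L1' Nr by simp
      also have "\<dots> \<le> (40 * real N) / (real N * L)"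
        by (rule divide_right_mono[OF key]) (use NL in simp)
      also have "\<dots> = 40 * (1 / L)" using Nr L1' by simp
      finally have fin: "(6 + 4 * L) / real N \<le> 40 * (1 / L)" .
      have nrm: "norm (1 / ln (real N)) = 1 / L" unfolding L_def using L1 by simp
      show ?case unfolding nrm real_norm_def using final_bound[OF N1] fin unfolding L_def by linarith
    qed
  qed
qed


end
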